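(* For $\beta,\gamma\in\mathbb{C}\setminus\{0,-1,-2\}$, the modules $\mathbb{M}_\beta$ and $\mathbb{M}_\gamma$ are isomorphic $B_{5,10}$-modules if and only if $(1+\beta)^2=(1+\gamma)^2$, i.e. if and only if $\beta=\gamma$ or $\beta+\gamma=-2$.
   Context: Let $Z=\mathbb{C}[[t]]$. Let $\Gamma_{10}$ be the quiver with vertices $0,1,\dots,9$ (indices taken mod $10$) on a cycle and arrows $x_i\colon i-1\to i$, $y_i\colon i\to i-1$ for $i=1,\dots,10$. Let $B_{5,10}$ be the completed path algebra of $\Gamma_{10}$ modulo the closed ideal generated by $xy=yx$ and $x^5=y^5$ at every vertex. For $b=(b_1,\dots,b_{10})\in Z^{10}$ with $\sum_i b_i=0$, the $B_{5,10}$-module $\mathbb{M}(b)$ has $V_i=Z\oplus Z$ at every vertex, and for odd $j$: $x_j=\begin{pmatrix} t& b_j\\ 0&1\end{pmatrix}$, $y_j=\begin{pmatrix} 1&-b_j\\0&t\end{pmatrix}$; for even $j$: $x_j=\begin{pmatrix}1&b_j\\0&t\end{pmatrix}$, $y_j=\begin{pmatrix}t&-b_j\\0&1\end{pmatrix}$. An isomorphism $\mathbb{M}(b)\to\mathbb{M}(c)$ is a family of invertible $Z$-linear maps $\varphi_i\colon Z^2\to Z^2$ commuting with all $x_i$ and $y_i$. For odd $i$ write $B_i=b_i+b_{i+1}$ (indices mod $10$). For $\beta\in\mathbb{C}\setminus\{0,-1,-2\}$, $\mathbb{M}_\beta$ denotes $\mathbb{M}(b)$ for a tuple $b$ with $B_1=\beta$,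 $B_3=1$, $B_5=-1$, $B_7=-\beta-1$, $B_9=1$ (e.g. $b_i=B_i$ for odd $i$ and $b_i=0$ for even $i$). *)

theory Defs
  imports "HOL-Analysis.Analysis" "HOL-Computational_Algebra.Formal_Power_Series"
begin

text \<open>Z = C[[t]] is the type complex fps, t = fps_X. Z-linear maps Z^2 -> Z^2 are
  2x2 matrices over Z acting on column vectors.\<close>

definition mat2 :: "'a::zero \<Rightarrow> 'a \<Rightarrow> 'a \<Rightarrow> 'a \<Rightarrow> 'a^2^2" where
  "mat2 a b c d = (\<chi> i j. if i = 1 then (if j = 1 then a else b) else (if j = 1 then c else d))"

text \<open>The arrow x_j : V_(j-1) -> V_j of M(b), j = 1..10 (vertex 10 = vertex 0).\<close>
definition xmat :: "(nat \<Rightarrow> complex fps) \<Rightarrow> nat \<Rightarrow> complex fps^2^2" where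
  "xmat b j = (if odd j then mat2 fps_X (b j) 0 1 else mat2 1 (b j) 0 fps_X)"

text \<open>The arrow y_j : V_j -> V_(j-1) of M(b).\<close>
definition ymat :: "(nat \<Rightarrow> complex fps) \<Rightarrow> nat \<Rightarrow> complex fps^2^2" where
  "ymat b j = (if odd j then mat2 1 (- b j) 0 fps_X else mat2 fps_X (- b j) 0 1)"

definition M_iso :: "(nat \<Rightarrow> complex fps) \<Rightarrow> (nat \<Rightarrow> complex fps) \<Rightarrow> bool" where
  "M_iso b c \<longleftrightarrow> (\<exists>\<phi> :: nat \<Rightarrow> complex fps^2^2.
     (\<forall>i<10. invertible (\<phi> i)) \<and>
     (\<forall>j\<in>{1..10}. \<phi> (j mod 10) ** xmat b j = xmat c j ** \<phi> (j - 1) \<and>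
                  \<phi> (j - 1) ** ymat b j = ymat c j ** \<phi> (j mod 10)))"

definition M_beta_tuple :: "(nat \<Rightarrow> complex fps) \<Rightarrow> complex \<Rightarrow> bool" where
  "M_beta_tuple b \<beta> \<longleftrightarrow> (\<Sum>i=1..10. b i) = 0 \<and>
     b 1 + b 2 = fps_const \<beta> \<and> b 3 + b 4 = 1 \<and> b 5 + b 6 = -1 \<and>
     b 7 + b 8 = fps_const (- \<beta> - 1) \<and> b 9 + b 10 = 1"

end

theory Submission imports Defs begin

lemma mat2_nth[simp]: "mat2 a b c d $ 1 $ 1 = a" "mat2 a b c d $ 1 $ 2 = b"
  "mat2 a b c d $ 2 $ 1 = c" "mat2 a b c d $ 2 $ 2 = d"
  by (simp_all add: mat2_def)

lemma mat2_eq_iff: "mat2 a b c d = mat2 a' b' c' d' \<longleftrightarrow> a = a' \<and> b = b' \<and> c = c' \<and> d = d'"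
  by (auto simp: vec_eq_iff forall_2 mat2_def)

lemma mat2_eta: "(A::'a::zero^2^2) = mat2 (A$1$1) (A$1$2) (A$2$1) (A$2$2)"
  by (auto simp: vec_eq_iff forall_2 mat2_def)

lemma mat2_mult: "mat2 a b c d ** mat2 a' b' c' d' =
   mat2 (a*a' + b*c') (a*b' + b*d') (c*a' + d*c') (c*b' + d*d')"
  by (auto simp: vec_eq_iff forall_2 matrix_matrix_mult_def sum_2 mat2_def)

lemma mat2_one: "mat 1 = mat2 1 0 0 (1::'a::{zero,one})"
  by (auto simp: vec_eq_iff forall_2 mat_def mat2_def)

lemma invertible_mat2:
  fixes p q r s :: "complex fps"
  assumes "p * s - q * r = fps_const u" "u \<noteq> 0"
  shows "invertible (mat2 p q r s)"
proof -
  define k where "k = fps_const (1/u)"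
  have "k * fps_const u = 1" using assms(2) by (simp add: k_def)
  then have "mat2 p q r s ** mat2 (s * k) (-q * k) (-r * k) (p * k) = mat 1"
    "mat2 (s * k) (-q * k) (-r * k) (p * k) ** mat2 p q r s = mat 1"
    using assms(1) by (simp_all add: mat2_mult mat2_one mat2_eq_iff algebra_simps)
  then show ?thesis unfolding invertible_def by blast
qed

lemma invertible_nonzero:
  fixes p q r s :: "complex fps"
  assumes "invertible (mat2 p q r s)" "fps_nth r 0 = 0"
  shows "fps_nth p 0 * fps_nth s 0 \<noteq> 0"
proof -
  obtain B where "mat2 p q r s ** B = mat 1" using assms(1) unfolding invertible_def by blast
  then have "det (mat2 p q r s) * det B = 1" by (metis det_mul det_I)
  then have "fps_nth (det (mat2 p q r s)) 0 * fps_nth (det B) 0 = 1"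
    by (metis fps_mult_nth_0 fps_one_nth)
  then have "fps_nth (det (mat2 p q r s)) 0 \<noteq> 0" by auto
  then show ?thesis using assms(2) by (simp add: det_2)
qed

lemma fps_mult_nth_1: "fps_nth (f * g) 1 = fps_nth f 0 * fps_nth g 1 + fps_nth f 1 * fps_nth g 0"
  by (simp add: fps_mult_nth numeral_2_eq_2)

lemma fps_X_nth_mult: fixes f :: "'a::comm_ring_1 fps" shows "fps_nth (fps_X * f) (Suc n) = fps_nth f n" "fps_nth (fps_X * f) 0 = 0"
  "fps_nth (f * fps_X) (Suc n) = fps_nth f n" "fps_nth (f * fps_X) 0 = 0"
  by (simp_all add: mult.commute[of f])

lemma nec_step:
  fixes p q r s P Q R S p' q' r' s' b c b' c' :: "complex fps"
  assumes odd: "mat2 P Q R S ** mat2 fps_X b 0 1 = mat2 fps_X c 0 1 ** mat2 p q r s"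
    and even: "mat2 p' q' r' s' ** mat2 1 b' 0 fps_X = mat2 1 c' 0 fps_X ** mat2 P Q R S"
  shows "fps_nth r 0 = 0" "fps_nth r 1 = fps_nth R 0" "fps_nth r' 1 = fps_nth R 0"
    "fps_nth p' 0 = fps_nth p 0 + (fps_nth c 0 + fps_nth c' 0) * fps_nth R 0"
    "fps_nth s' 0 = fps_nth s 0 - (fps_nth b 0 + fps_nth b' 0) * fps_nth R 0"
    "(fps_nth c 0 + fps_nth c' 0) * fps_nth s 0 - (fps_nth b 0 + fps_nth b' 0) * fps_nth p 0
      = fps_nth R 0 * (fps_nth b 0 + fps_nth b' 0) * (fps_nth c 0 + fps_nth c' 0)"
proof -
  have "mat2 (P * fps_X) (P * b + Q) (R * fps_X) (R * b + S) = mat2 (fps_X * p + c * r) (fps_X * q + c * s) r s"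
    using odd by (simp add: mat2_mult)
  then have HO: "P * fps_X = fps_X * p + c * r \<and> P * b + Q = fps_X * q + c * s \<and> R * fps_X = r \<and> R * b + S = s"
    unfolding mat2_eq_iff .
  have "mat2 p' (p' * b' + q' * fps_X) r' (r' * b' + s' * fps_X) = mat2 (P + c' * R) (Q + c' * S) (fps_X * R) (fps_X * S)"
    using even by (simp add: mat2_mult)
  then have HE: "p' = P + c' * R \<and> p' * b' + q' * fps_X = Q + c' * S \<and> r' = fps_X * R \<and> r' * b' + s' * fps_X = fps_X * S"
    unfolding mat2_eq_iff .
  from HO have o1: "P * fps_X = fps_X * p + c * r" and o2: "P * b + Q = fps_X * q + c * s"
    and o3: "R * fps_X = r" and o4: "R * b + S = s"
    by blast+
  from HE have e1: "p' = P + c' * R" and e2: "p' * b' + q' * fps_X = Q + c' * S"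
    and e3: "r' = fps_X * R" and e4: "r' * b' + s' * fps_X = fps_X * S"
    by blast+
  have r0: "fps_nth r 0 = 0" using o3 by (metis fps_X_nth_mult(4))
  have r1: "fps_nth r 1 = fps_nth R 0" using o3 by (metis fps_X_nth_mult(3) One_nat_def)
  have r'0: "fps_nth r' 0 = 0" using e3 by (simp add: fps_X_nth_mult)
  have r'1: "fps_nth r' 1 = fps_nth R 0" using e3 by (metis fps_X_nth_mult(1) One_nat_def)
  have P0: "fps_nth P 0 = fps_nth p 0 + fps_nth c 0 * fps_nth R 0"
    using arg_cong[OF o1, of "\<lambda>f. fps_nth f 1"] r0 r1
    by (simp add: fps_mult_nth_1 fps_X_nth_mult)
  have S0: "fps_nth S 0 = fps_nth s 0 - fps_nth R 0 * fps_nth b 0"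
    using arg_cong[OF o4, of "\<lambda>f. fps_nth f 0"] by (simp add: algebra_simps)
  have Q0: "fps_nth Q 0 = fps_nth c 0 * fps_nth s 0 - fps_nth P 0 * fps_nth b 0"
    using arg_cong[OF o2, of "\<lambda>f. fps_nth f 0"] by (simp add: algebra_simps)
  have p'0: "fps_nth p' 0 = fps_nth P 0 + fps_nth c' 0 * fps_nth R 0"
    using e1 by simp
  have E2: "fps_nth p' 0 * fps_nth b' 0 = fps_nth Q 0 + fps_nth c' 0 * fps_nth S 0"
    using arg_cong[OF e2, of "\<lambda>f. fps_nth f 0"] by (simp add: fps_X_nth_mult)
  have E4: "fps_nth R 0 * fps_nth b' 0 + fps_nth s' 0 = fps_nth S 0"
    using arg_cong[OF e4, of "\<lambda>f. fps_nth f 1"] r'0 r'1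
    by (simp add: fps_mult_nth_1 fps_X_nth_mult mult.commute)
  show "fps_nth r 0 = 0" "fps_nth r 1 = fps_nth R 0" "fps_nth r' 1 = fps_nth R 0" using r0 r1 r'1 by auto
  show "fps_nth p' 0 = fps_nth p 0 + (fps_nth c 0 + fps_nth c' 0) * fps_nth R 0"
    using p'0 P0 by (simp add: algebra_simps)
  show "fps_nth s' 0 = fps_nth s 0 - (fps_nth b 0 + fps_nth b' 0) * fps_nth R 0"
    using E4 S0 by (simp add: algebra_simps)
  show "(fps_nth c 0 + fps_nth c' 0) * fps_nth s 0 - (fps_nth b 0 + fps_nth b' 0) * fps_nth p 0
      = fps_nth R 0 * (fps_nth b 0 + fps_nth b' 0) * (fps_nth c 0 + fps_nth c' 0)"
    using E2 p'0 P0 Q0 S0 by (simp add: algebra_simps)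
qed


definition ev :: "complex \<Rightarrow> complex \<Rightarrow> complex \<Rightarrow> complex fps^2^2" where
  "ev \<alpha> \<delta> e = mat2 (fps_const \<alpha>) 0 (fps_X * fps_const e) (fps_const \<delta>)"

definition od :: "complex \<Rightarrow> complex \<Rightarrow> complex \<Rightarrow> complex fps \<Rightarrow> complex fps \<Rightarrow> complex fps^2^2" where
  "od \<alpha> \<delta> e b c = mat2 (fps_const \<alpha> + c * fps_const e)
     (- (fps_const \<alpha> + c * fps_const e) * b + c * fps_const \<delta>) (fps_const e) (fps_const \<delta> - fps_const e * b)"

lemma inv_ev: "\<alpha> * \<delta> \<noteq> 0 \<Longrightarrow> invertible (ev \<alpha> \<delta> e)"
  unfolding ev_def by (rule invertible_mat2[where u = "\<alpha> * \<delta>"]) auto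

lemma inv_od: "\<alpha> * \<delta> \<noteq> 0 \<Longrightarrow> invertible (od \<alpha> \<delta> e b c)"
  unfolding od_def
proof (rule invertible_mat2[where u = "\<alpha> * \<delta>"])
  show "(fps_const \<alpha> + c * fps_const e) * (fps_const \<delta> - fps_const e * b) -
    (- (fps_const \<alpha> + c * fps_const e) * b + c * fps_const \<delta>) * fps_const e = fps_const (\<alpha> * \<delta>)"
    by (simp add: algebra_simps flip: fps_const_mult fps_const_neg fps_const_sub)
qed auto

lemma pair_step:
  fixes b c b' c' :: "complex fps"
  assumes b': "b' = fps_const B - b" and c': "c' = fps_const C - c"
    and cond: "C * \<delta> - B * \<alpha> = e * B * C"
  shows "od \<alpha> \<delta> e b c ** mat2 fps_X b 0 1 = mat2 fps_X c 0 1 ** ev \<alpha> \<delta> e"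
    "ev \<alpha> \<delta> e ** mat2 1 (-b) 0 fps_X = mat2 1 (-c) 0 fps_X ** od \<alpha> \<delta> e b c"
    "ev (\<alpha> + C * e) (\<delta> - B * e) e ** mat2 1 b' 0 fps_X = mat2 1 c' 0 fps_X ** od \<alpha> \<delta> e b c"
    "od \<alpha> \<delta> e b c ** mat2 fps_X (-b') 0 1 = mat2 fps_X (-c') 0 1 ** ev (\<alpha> + C * e) (\<delta> - B * e) e"
proof -
  have K: "fps_const C * fps_const \<delta> = fps_const B * fps_const \<alpha> + fps_const e * fps_const B * fps_const C"
    using cond by (simp add: algebra_simps flip: fps_const_mult fps_const_add fps_const_neg fps_const_sub)
  show "od \<alpha> \<delta> e b c ** mat2 fps_X b 0 1 = mat2 fps_X c 0 1 ** ev \<alpha> \<delta> e"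
    unfolding od_def ev_def mat2_mult mat2_eq_iff by (simp add: algebra_simps flip: fps_const_neg fps_const_sub)
  show "ev \<alpha> \<delta> e ** mat2 1 (-b) 0 fps_X = mat2 1 (-c) 0 fps_X ** od \<alpha> \<delta> e b c"
    unfolding od_def ev_def mat2_mult mat2_eq_iff by (simp add: algebra_simps flip: fps_const_neg fps_const_sub)
  show "ev (\<alpha> + C * e) (\<delta> - B * e) e ** mat2 1 b' 0 fps_X = mat2 1 c' 0 fps_X ** od \<alpha> \<delta> e b c"
    unfolding od_def ev_def mat2_mult mat2_eq_iff b' c' using K
    by (simp add: algebra_simps flip: fps_const_mult fps_const_add fps_const_neg fps_const_sub)
  show "od \<alpha> \<delta> e b c ** mat2 fps_X (-b') 0 1 = mat2 fps_X (-c') 0 1 ** ev (\<alpha> + C * e) (\<delta> - B * e) e"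
    unfolding od_def ev_def mat2_mult mat2_eq_iff b' c' using K
    by (simp add: algebra_simps flip: fps_const_mult fps_const_add fps_const_neg fps_const_sub)
qed


lemma j_cases: "(j::nat) \<in> {1..10} \<Longrightarrow> j = 1 \<or> j = 2 \<or> j = 3 \<or> j = 4 \<or> j = 5 \<or> j = 6 \<or> j = 7 \<or> j = 8 \<or> j = 9 \<or> j = 10"
  by (simp only: atLeastAtMost_iff) presburger

lemma i_cases: "(i::nat) < 10 \<Longrightarrow> i = 0 \<or> i = 1 \<or> i = 2 \<or> i = 3 \<or> i = 4 \<or> i = 5 \<or> i = 6 \<or> i = 7 \<or> i = 8 \<or> i = 9"
  by presburger

lemma suff:
  fixes b c :: "nat \<Rightarrow> complex fps"
  assumes hb: "b 2 = fps_const B1 - b 1" "b 4 = fps_const B2 - b 3" "b 6 = fps_const B3 - b 5"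
     "b 8 = fps_const B4 - b 7" "b 10 = fps_const B5 - b 9"
   and hc: "c 2 = fps_const C1 - c 1" "c 4 = fps_const C2 - c 3" "c 6 = fps_const C3 - c 5"
     "c 8 = fps_const C4 - c 7" "c 10 = fps_const C5 - c 9"
   and ha: "a1 = a0 + C1 * e" "a2 = a1 + C2 * e" "a3 = a2 + C3 * e" "a4 = a3 + C4 * e" "a0 = a4 + C5 * e"
   and hd: "d1 = d0 - B1 * e" "d2 = d1 - B2 * e" "d3 = d2 - B3 * e" "d4 = d3 - B4 * e" "d0 = d4 - B5 * e"
   and cond: "C1 * d0 - B1 * a0 = e * B1 * C1" "C2 * d1 - B2 * a1 = e * B2 * C2"
     "C3 * d2 - B3 * a2 = e * B3 * C3" "C4 * d3 - B4 * a3 = e * B4 * C4" "C5 * d4 - B5 * a4 = e * B5 * C5"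
   and nz: "a0 * d0 \<noteq> 0" "a1 * d1 \<noteq> 0" "a2 * d2 \<noteq> 0" "a3 * d3 \<noteq> 0" "a4 * d4 \<noteq> 0"
  shows "M_iso b c"
proof -
  define \<phi> where "\<phi> i = (if i = 0 then ev a0 d0 e else if i = 1 then od a0 d0 e (b 1) (c 1)
     else if i = 2 then ev a1 d1 e else if i = 3 then od a1 d1 e (b 3) (c 3)
     else if i = 4 then ev a2 d2 e else if i = 5 then od a2 d2 e (b 5) (c 5)
     else if i = 6 then ev a3 d3 e else if i = 7 then od a3 d3 e (b 7) (c 7)
     else if i = 8 then ev a4 d4 e else od a4 d4 e (b 9) (c 9))" for i :: nat
  note s1 = pair_step[OF hb(1) hc(1) cond(1), folded ha(1) hd(1)]
  note s2 = pair_step[OF hb(2) hc(2) cond(2), folded ha(2) hd(2)]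
  note s3 = pair_step[OF hb(3) hc(3) cond(3), folded ha(3) hd(3)]
  note s4 = pair_step[OF hb(4) hc(4) cond(4), folded ha(4) hd(4)]
  note s5 = pair_step[OF hb(5) hc(5) cond(5), folded ha(5) hd(5)]
  have inv: "\<forall>i<10. invertible (\<phi> i)"
  proof (intro allI impI)
    fix i :: nat assume "i < 10"
    then show "invertible (\<phi> i)" using i_cases[of i] nz
      by (auto simp: \<phi>_def intro!: inv_ev inv_od)
  qed
  have e1: "\<phi> 1 ** xmat b 1 = xmat c 1 ** \<phi> 0 \<and> \<phi> 0 ** ymat b 1 = ymat c 1 ** \<phi> 1"
    unfolding xmat_def ymat_def using s1 by (simp add: \<phi>_def)
  have e2: "\<phi> 2 ** xmat b 2 = xmat c 2 ** \<phi> 1 \<and> \<phi> 1 ** ymat b 2 = ymat c 2 ** \<phi> 2"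
    unfolding xmat_def ymat_def using s1 by (simp add: \<phi>_def)
  have e3: "\<phi> 3 ** xmat b 3 = xmat c 3 ** \<phi> 2 \<and> \<phi> 2 ** ymat b 3 = ymat c 3 ** \<phi> 3"
    unfolding xmat_def ymat_def using s2 by (simp add: \<phi>_def)
  have e4: "\<phi> 4 ** xmat b 4 = xmat c 4 ** \<phi> 3 \<and> \<phi> 3 ** ymat b 4 = ymat c 4 ** \<phi> 4"
    unfolding xmat_def ymat_def using s2 by (simp add: \<phi>_def)
  have e5: "\<phi> 5 ** xmat b 5 = xmat c 5 ** \<phi> 4 \<and> \<phi> 4 ** ymat b 5 = ymat c 5 ** \<phi> 5"
    unfolding xmat_def ymat_def using s3 by (simp add: \<phi>_def)
  have e6: "\<phi> 6 ** xmat b 6 = xmat c 6 ** \<phi> 5 \<and> \<phi> 5 ** ymat b 6 = ymat c 6 ** \<phi> 6"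
    unfolding xmat_def ymat_def using s3 by (simp add: \<phi>_def)
  have e7: "\<phi> 7 ** xmat b 7 = xmat c 7 ** \<phi> 6 \<and> \<phi> 6 ** ymat b 7 = ymat c 7 ** \<phi> 7"
    unfolding xmat_def ymat_def using s4 by (simp add: \<phi>_def)
  have e8: "\<phi> 8 ** xmat b 8 = xmat c 8 ** \<phi> 7 \<and> \<phi> 7 ** ymat b 8 = ymat c 8 ** \<phi> 8"
    unfolding xmat_def ymat_def using s4 by (simp add: \<phi>_def)
  have e9: "\<phi> 9 ** xmat b 9 = xmat c 9 ** \<phi> 8 \<and> \<phi> 8 ** ymat b 9 = ymat c 9 ** \<phi> 9"
    unfolding xmat_def ymat_def using s5 by (simp add: \<phi>_def)
  have e10: "\<phi> 0 ** xmat b 10 = xmat c 10 ** \<phi> 9 \<and> \<phi> 9 ** ymat b 10 = ymat c 10 ** \<phi> 0"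
    unfolding xmat_def ymat_def using s5 by (simp add: \<phi>_def)
  have eqs: "\<forall>j\<in>{1..10}. \<phi> (j mod 10) ** xmat b j = xmat c j ** \<phi> (j - 1) \<and>
                  \<phi> (j - 1) ** ymat b j = ymat c j ** \<phi> (j mod 10)"
  proof
    fix j :: nat assume "j \<in> {1..10}"
    then show "\<phi> (j mod 10) ** xmat b j = xmat c j ** \<phi> (j - 1) \<and>
                  \<phi> (j - 1) ** ymat b j = ymat c j ** \<phi> (j mod 10)"
      using j_cases[of j] e1 e2 e3 e4 e5 e6 e7 e8 e9 e10 by fastforce
  qed
  show ?thesis unfolding M_iso_def using inv eqs by blast
qed


lemma alg_nec:
  fixes a d e p2 s2 p4 s4 p6 s6 p8 s8 \<beta> \<gamma> :: complex
  assumes nz: "a * d \<noteq> 0"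
    and k0: "\<gamma> * d - \<beta> * a = e * \<beta> * \<gamma>" "p2 = a + \<gamma> * e" "s2 = d - \<beta> * e"
    and k1: "s2 - p2 = e" "p4 = p2 + e" "s4 = s2 - e"
    and k2: "p6 = p4 - e" "s6 = s4 + e"
    and k3: "p8 = p6 + (-\<gamma> - 1) * e" "s8 = s6 + (\<beta> + 1) * e"
    and k4: "s8 - p8 = e"
  shows "(1 + \<beta>)^2 = (1 + \<gamma>)^2"
proof -
  have h1: "d - a = (\<beta> + \<gamma> + 1) * e" using k0(2,3) k1(1) by (simp add: algebra_simps)
  have h2: "d - a = - e" using k0(2,3) k1(2,3) k2 k3 k4 by (simp add: algebra_simps)
  have "e * (\<beta> + \<gamma> + 2) = 0" using h1 h2 by (simp add: algebra_simps)
  then consider "e = 0" | "\<beta> + \<gamma> + 2 = 0" by auto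
  then show ?thesis
  proof cases
    case 1
    then have "a = d" using h2 by simp
    then have "(\<gamma> - \<beta>) * a = 0" using k0(1) 1 by (simp add: algebra_simps)
    then have "\<gamma> = \<beta>" using nz by auto
    then show ?thesis by simp
  next
    case 2
    then have "1 + \<gamma> = - (1 + \<beta>)" by (simp add: algebra_simps add_eq_0_iff)
    then show ?thesis by (metis power2_minus)
  qed
qed

lemma sq_iff: "((1 + \<beta>)^2 = (1 + \<gamma>)^2) \<longleftrightarrow> \<beta> = \<gamma> \<or> \<beta> + \<gamma> = (-2::complex)"
proof -
  have f: "(1 + \<beta>)^2 - (1 + \<gamma>)^2 = (\<beta> - \<gamma>) * (\<beta> + \<gamma> + 2)" by (simp add: power2_eq_square algebra_simps)
  have "((1 + \<beta>)^2 = (1 + \<gamma>)^2) \<longleftrightarrow> (\<beta> - \<gamma>) * (\<beta> + \<gamma> + 2) = 0"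
    by (subst f[symmetric]) simp
  also have "\<dots> \<longleftrightarrow> \<beta> - \<gamma> = 0 \<or> \<beta> + \<gamma> + 2 = 0" by simp
  also have "\<beta> - \<gamma> = 0 \<longleftrightarrow> \<beta> = \<gamma>" by simp
  also have "\<beta> + \<gamma> + 2 = 0 \<longleftrightarrow> \<beta> + \<gamma> = -2" by (simp add: add_eq_0_iff eq_neg_iff_add_eq_0)
  finally show ?thesis .
qed


lemma nec:
  fixes \<beta> \<gamma> :: complex and b c :: "nat \<Rightarrow> complex fps"
  assumes tb: "M_beta_tuple b \<beta>" and tc: "M_beta_tuple c \<gamma>" and iso: "M_iso b c"
  shows "(1 + \<beta>)^2 = (1 + \<gamma>)^2"
proof -
  obtain \<phi> :: "nat \<Rightarrow> complex fps^2^2" where inv: "\<forall>i<10. invertible (\<phi> i)"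
    and eqs: "\<forall>j\<in>{1..10}. \<phi> (j mod 10) ** xmat b j = xmat c j ** \<phi> (j - 1) \<and>
                  \<phi> (j - 1) ** ymat b j = ymat c j ** \<phi> (j mod 10)"
    using iso unfolding M_iso_def by blast
  define pp where "pp i = \<phi> i $ 1 $ 1" for i
  define qq where "qq i = \<phi> i $ 1 $ 2" for i
  define rr where "rr i = \<phi> i $ 2 $ 1" for i
  define ss where "ss i = \<phi> i $ 2 $ 2" for i
  have ph: "\<phi> i = mat2 (pp i) (qq i) (rr i) (ss i)" for i
    unfolding pp_def qq_def rr_def ss_def by (rule mat2_eta)
  have X: "\<phi> (j mod 10) ** xmat b j = xmat c j ** \<phi> (j - 1)" if "j \<in> {1..10}" for j
    using eqs that by blast
  have xo: "xmat b j = mat2 fps_X (b j) 0 1" if "odd j" for b j using that by (simp add: xmat_def)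
  have xe: "xmat b j = mat2 1 (b j) 0 fps_X" if "even j" for b j using that by (simp add: xmat_def)
  have E1: "mat2 (pp 1) (qq 1) (rr 1) (ss 1) ** mat2 fps_X (b 1) 0 1 = mat2 fps_X (c 1) 0 1 ** mat2 (pp 0) (qq 0) (rr 0) (ss 0)"
    using X[of 1] unfolding ph by (simp add: xmat_def)
  have E2: "mat2 (pp 2) (qq 2) (rr 2) (ss 2) ** mat2 1 (b 2) 0 fps_X = mat2 1 (c 2) 0 fps_X ** mat2 (pp 1) (qq 1) (rr 1) (ss 1)"
    using X[of 2] unfolding ph by (simp add: xmat_def)
  have E3: "mat2 (pp 3) (qq 3) (rr 3) (ss 3) ** mat2 fps_X (b 3) 0 1 = mat2 fps_X (c 3) 0 1 ** mat2 (pp 2) (qq 2) (rr 2) (ss 2)"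
    using X[of 3] unfolding ph by (simp add: xmat_def)
  have E4: "mat2 (pp 4) (qq 4) (rr 4) (ss 4) ** mat2 1 (b 4) 0 fps_X = mat2 1 (c 4) 0 fps_X ** mat2 (pp 3) (qq 3) (rr 3) (ss 3)"
    using X[of 4] unfolding ph by (simp add: xmat_def)
  have E5: "mat2 (pp 5) (qq 5) (rr 5) (ss 5) ** mat2 fps_X (b 5) 0 1 = mat2 fps_X (c 5) 0 1 ** mat2 (pp 4) (qq 4) (rr 4) (ss 4)"
    using X[of 5] unfolding ph by (simp add: xmat_def)
  have E6: "mat2 (pp 6) (qq 6) (rr 6) (ss 6) ** mat2 1 (b 6) 0 fps_X = mat2 1 (c 6) 0 fps_X ** mat2 (pp 5) (qq 5) (rr 5) (ss 5)"
    using X[of 6] unfolding ph by (simp add: xmat_def)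
  have E7: "mat2 (pp 7) (qq 7) (rr 7) (ss 7) ** mat2 fps_X (b 7) 0 1 = mat2 fps_X (c 7) 0 1 ** mat2 (pp 6) (qq 6) (rr 6) (ss 6)"
    using X[of 7] unfolding ph by (simp add: xmat_def)
  have E8: "mat2 (pp 8) (qq 8) (rr 8) (ss 8) ** mat2 1 (b 8) 0 fps_X = mat2 1 (c 8) 0 fps_X ** mat2 (pp 7) (qq 7) (rr 7) (ss 7)"
    using X[of 8] unfolding ph by (simp add: xmat_def)
  have E9: "mat2 (pp 9) (qq 9) (rr 9) (ss 9) ** mat2 fps_X (b 9) 0 1 = mat2 fps_X (c 9) 0 1 ** mat2 (pp 8) (qq 8) (rr 8) (ss 8)"
    using X[of 9] unfolding ph by (simp add: xmat_def)
  have E10: "mat2 (pp 0) (qq 0) (rr 0) (ss 0) ** mat2 1 (b 10) 0 fps_X = mat2 1 (c 10) 0 fps_X ** mat2 (pp 9) (qq 9) (rr 9) (ss 9)"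
    using X[of 10] unfolding ph by (simp add: xmat_def)
  note n0 = nec_step[OF E1 E2]
  note n1 = nec_step[OF E3 E4]
  note n2 = nec_step[OF E5 E6]
  note n3 = nec_step[OF E7 E8]
  note n4 = nec_step[OF E9 E10]
  have sb: "fps_nth (b 1) 0 + fps_nth (b 2) 0 = \<beta>" "fps_nth (b 3) 0 + fps_nth (b 4) 0 = 1"
    "fps_nth (b 5) 0 + fps_nth (b 6) 0 = -1" "fps_nth (b 7) 0 + fps_nth (b 8) 0 = - \<beta> - 1"
    "fps_nth (b 9) 0 + fps_nth (b 10) 0 = 1"
    using tb unfolding M_beta_tuple_def by (metis fps_add_nth fps_nth_fps_const fps_one_nth fps_neg_nth)+
  have sc: "fps_nth (c 1) 0 + fps_nth (c 2) 0 = \<gamma>" "fps_nth (c 3) 0 + fps_nth (c 4) 0 = 1"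
    "fps_nth (c 5) 0 + fps_nth (c 6) 0 = -1" "fps_nth (c 7) 0 + fps_nth (c 8) 0 = - \<gamma> - 1"
    "fps_nth (c 9) 0 + fps_nth (c 10) 0 = 1"
    using tc unfolding M_beta_tuple_def by (metis fps_add_nth fps_nth_fps_const fps_one_nth fps_neg_nth)+
  have nz: "fps_nth (pp 0) 0 * fps_nth (ss 0) 0 \<noteq> 0"
  proof -
    have "invertible (\<phi> 0)" using inv by simp
    then show ?thesis using invertible_nonzero[of "pp 0" "qq 0" "rr 0" "ss 0"] ph[of 0] n0(1) by simp
  qed
  have e1: "fps_nth (rr 3) 0 = fps_nth (rr 1) 0" using n0(3) n1(2) by simp
  have e2: "fps_nth (rr 5) 0 = fps_nth (rr 1) 0" using n1(3) n2(2) e1 by simp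
  have e3: "fps_nth (rr 7) 0 = fps_nth (rr 1) 0" using n2(3) n3(2) e2 by simp
  have e4: "fps_nth (rr 9) 0 = fps_nth (rr 1) 0" using n3(3) n4(2) e3 by simp
  note m0 = n0[unfolded sb sc] and m1 = n1[unfolded sb sc e1] and m2 = n2[unfolded sb sc e2]
    and m3 = n3[unfolded sb sc e3] and m4 = n4[unfolded sb sc e4]
  let ?e = "fps_nth (rr 1) 0"
  have h1: "\<gamma> * fps_nth (ss 0) 0 - \<beta> * fps_nth (pp 0) 0 = ?e * \<beta> * \<gamma>" using m0(6) by simp
  have h2: "fps_nth (pp 2) 0 = fps_nth (pp 0) 0 + \<gamma> * ?e" using m0(4) by simp
  have h3: "fps_nth (ss 2) 0 = fps_nth (ss 0) 0 - \<beta> * ?e" using m0(5) by simp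
  have h4: "fps_nth (ss 2) 0 - fps_nth (pp 2) 0 = ?e" using m1(6) by simp
  have h5: "fps_nth (pp 4) 0 = fps_nth (pp 2) 0 + ?e" using m1(4) by simp
  have h6: "fps_nth (ss 4) 0 = fps_nth (ss 2) 0 - ?e" using m1(5) by simp
  have h7: "fps_nth (pp 6) 0 = fps_nth (pp 4) 0 - ?e" using m2(4) by simp
  have h8: "fps_nth (ss 6) 0 = fps_nth (ss 4) 0 + ?e" using m2(5) by simp
  have h9: "fps_nth (pp 8) 0 = fps_nth (pp 6) 0 + (-\<gamma> - 1) * ?e" using m3(4) by simp
  have h10: "fps_nth (ss 8) 0 = fps_nth (ss 6) 0 + (\<beta> + 1) * ?e" using m3(5) by (simp add: algebra_simps)
  have h11: "fps_nth (ss 8) 0 - fps_nth (pp 8) 0 = ?e" using m4(6) by simp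
  show ?thesis by (rule alg_nec[OF nz h1 h2 h3 h4 h5 h6 h7 h8 h9 h10 h11])
qed


lemma tuple_eqs:
  assumes "M_beta_tuple b \<beta>"
  shows "b 2 = fps_const \<beta> - b 1" "b 4 = fps_const 1 - b 3" "b 6 = fps_const (-1) - b 5"
    "b 8 = fps_const (- \<beta> - 1) - b 7" "b 10 = fps_const 1 - b 9"
  using assms unfolding M_beta_tuple_def by (simp_all add: algebra_simps eq_diff_eq)

lemma suff_main:
  fixes \<beta> \<gamma> :: complex and b c :: "nat \<Rightarrow> complex fps"
  assumes "\<beta> \<notin> {0, -1, -2}" and tb: "M_beta_tuple b \<beta>" and tc: "M_beta_tuple c \<gamma>"
    and h: "\<beta> = \<gamma> \<or> \<beta> + \<gamma> = -2"
  shows "M_iso b c"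
  using h
proof
  assume eq: "\<beta> = \<gamma>"
  show ?thesis
    by (rule suff[OF tuple_eqs[OF tb] tuple_eqs[OF tc], of 1 1 0 1 1 1 1 1 1 1 1])
       (simp_all add: eq)
next
  assume "\<beta> + \<gamma> = -2"
  then have g: "\<gamma> = -2 - \<beta>" by (simp add: algebra_simps eq_diff_eq)
  have m2: "\<beta> \<noteq> - 2" using assms(1) by auto
  have n1: "\<beta> \<noteq> 0" "\<beta> + 2 \<noteq> 0" using assms(1) apply auto[1]
    using m2 eq_neg_iff_add_eq_0[of \<beta> 2] by simp
  have n2: "\<beta> * \<beta> + \<beta> * 2 \<noteq> 0"
  proof
    assume "\<beta> * \<beta> + \<beta> * 2 = 0"
    then have "\<beta> * (\<beta> + 2) = 0" by (simp add: algebra_simps)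
    then show False using n1 by simp
  qed
  show ?thesis
    by (rule suff[OF tuple_eqs[OF tb] tuple_eqs[OF tc],
          of "-2-\<beta>" "2+\<beta>" 2 "-\<beta>" "-\<beta>-2" "\<beta>" "-\<beta>" "\<beta>" "-\<beta>-2" "-\<beta>" "\<beta>+2"])
       (use n1 n2 in \<open>simp_all add: g algebra_simps\<close>)
qed

theorem mainTheorem8:
  fixes \<beta> \<gamma> :: complex and b c :: "nat \<Rightarrow> complex fps"
  assumes "\<beta> \<notin> {0, -1, -2}" and "\<gamma> \<notin> {0, -1, -2}"
    and "M_beta_tuple b \<beta>" and "M_beta_tuple c \<gamma>"
  shows "(M_iso b c \<longleftrightarrow> (1 + \<beta>)^2 = (1 + \<gamma>)^2) \<and>
         ((1 + \<beta>)^2 = (1 + \<gamma>)^2 \<longleftrightarrow> \<beta> = \<gamma> \<or> \<beta> + \<gamma> = -2)"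
  using nec[OF assms(3,4)] suff_main[OF assms(1,3,4)] sq_iff[of \<beta> \<gamma>] by blast

end
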